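(* Let $(\mathbf{x},y)\in\mathcal{X}\times\{1,\dots,c\}$, let $\mathbb{F}_s:\mathcal{X}\to\{1,\dots,c\}$ be a single-label classifier, let $\mathcal{R}$ be a set of patch regions and let $\mathcal{M}$ be an $\mathcal{R}$-covering mask set. Let $\boldsymbol{\lambda}\in\{0,1\}^{\mathcal{M}}$ be the array returned by DoubleMaskingCert$(\mathbf{x},y,\mathbb{F}_s,\mathcal{R},\mathcal{M})$. If $\mathbf{m}^*\in\mathcal{M}$ satisfies $\boldsymbol{\lambda}[\mathbf{m}^*]=1$, then for every patch region $\mathbf{r}\in\mathcal{R}$ that is covered by $\mathbf{m}^*$ (i.e. $\mathbf{m}^*[i,j]\le\mathbf{r}[i,j]$ for all $(i,j)$) and every $\mathbf{x}''\in\mathcal{X}$, $$\mathrm{DoubleMaskingInfer}(\mathbf{r}\circ\mathbf{x}+(\mathbf{1}-\mathbf{r})\circ\mathbf{x}'',\ \mathbb{F}_s,\ \mathcal{M})=y,$$ regardless of how ties in the majority vote and the iteration order over disagreers are resolved.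
   Context: Images lie in $\mathcal{X}\subseteq\mathbb{R}^{w\times h\times\gamma}$; patch regions and masks are binary matrices in $\{0,1\}^{w\times h}$ with entries $0$ inside the region/mask and $1$ outside; $\circ$ is entrywise product (broadcast over channels). A mask set $\mathcal{M}$ is $\mathcal{R}$-covering if for every $\mathbf{r}\in\mathcal{R}$ there is $\mathbf{m}\in\mathcal{M}$ with $\mathbf{m}[i,j]\le\mathbf{r}[i,j]$ for all $(i,j)$. MaskPred$(\mathbf{z},\mathbb{F}_s,\mathcal{M})$: form $\mathcal{P}=\{(\mathbf{m},\mathbb{F}_s(\mathbf{z}\circ\mathbf{m})):\mathbf{m}\in\mathcal{M}\}$; let $\hat{y}_{maj}$ be a label attaining the maximum of $|\{(\mathbf{m},\hat y)\in\mathcal{P}:\hat y=y^*\}|$ over $y^*$ (ties broken arbitrarily); let $\mathcal{P}_{dis}=\{(\mathbf{m},\hat y)\in\mathcal{P}:\hat y\ne\hat y_{maj}\}$; return $(\hat y_{maj},\mathcal{P}_{dis})$. DoubleMaskingInfer$(\mathbf{z},\mathbb{F}_s,\mathcal{M})$: compute $(\hat y_{maj},\mathcal{P}_{dis})=$MaskPred$(\mathbf{z},\mathbb{F}_s,\mathcal{M})$. If $\mathcal{P}_{dis}=\emptyset$, return $\hat y_{maj}$. Otherwise, iterate over $(\mathbf{m}_{dis},\hat y_{dis})\in\mathcal{P}_{dis}$ in some order; for each compute $(\hat y',\mathcal{P}')=$MaskPred$(\mathbf{z}\circ\mathbf{m}_{dis},\mathbb{F}_s,\mathcal{M})$ and if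 $\mathcal{P}'=\emptyset$ return $\hat y_{dis}$. If no disagreer returned, return $\hat y_{maj}$. DoubleMaskingCert$(\mathbf{x},y,\mathbb{F}_s,\mathcal{R},\mathcal{M})$: if $\mathcal{M}$ is not $\mathcal{R}$-covering, return $(0,\mathbf{0})$. Otherwise initialize $\boldsymbol{\lambda}[\mathbf{m}]=1$ for all $\mathbf{m}\in\mathcal{M}$ and $certVal=1$; for every ordered pair $(\mathbf{m}_0,\mathbf{m}_1)\in\mathcal{M}\times\mathcal{M}$, if $\mathbb{F}_s(\mathbf{x}\circ\mathbf{m}_0\circ\mathbf{m}_1)\ne y$ then set $certVal=0$, $\boldsymbol{\lambda}[\mathbf{m}_0]=0$, $\boldsymbol{\lambda}[\mathbf{m}_1]=0$. Return $(certVal,\boldsymbol{\lambda})$. (Thus $\boldsymbol{\lambda}[\mathbf{m}^*]=1$ iff $\mathbb{F}_s(\mathbf{x}\circ\mathbf{m}^*\circ\mathbf{m})=y$ and $\mathbb{F}_s(\mathbf{x}\circ\mathbf{m}\circ\mathbf{m}^* )=y$ for all $\mathbf{m}\in\mathcal{M}$, given $\mathcal{M}$ is $\mathcal{R}$-covering.) *)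

theory Defs
  imports Complex_Main
begin

text \<open>Images are functions on finite index types (width, height, channel) to reals;
  masks and patch regions are functions on (width, height) with values in {0,1}.\<close>

type_synonym ('w,'h,'g) image = "'w \<Rightarrow> 'h \<Rightarrow> 'g \<Rightarrow> real"
type_synonym ('w,'h) mask = "'w \<Rightarrow> 'h \<Rightarrow> real"

definition binary :: "('w,'h) mask \<Rightarrow> bool" where
  "binary m \<longleftrightarrow> (\<forall>i j. m i j = 0 \<or> m i j = 1)"

definition apply_mask :: "('w,'h,'g) image \<Rightarrow> ('w,'h) mask \<Rightarrow> ('w,'h,'g) image" (infixl "\<circ>\<^sub>m" 70) where
  "z \<circ>\<^sub>m m = (\<lambda>i j k. z i j k * m i j)"

definition patch :: "('w,'h) mask \<Rightarrow> ('w,'h,'g) image \<Rightarrow> ('w,'h,'g) image \<Rightarrow> ('w,'h,'g) image" where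
  "patch r x x2 = (\<lambda>i j k. r i j * x i j k + (1 - r i j) * x2 i j k)"

definition covers :: "('w,'h) mask \<Rightarrow> ('w,'h) mask \<Rightarrow> bool" where
  "covers m r \<longleftrightarrow> (\<forall>i j. m i j \<le> r i j)"

definition R_covering :: "('w,'h) mask set \<Rightarrow> ('w,'h) mask set \<Rightarrow> bool" where
  "R_covering R M \<longleftrightarrow> (\<forall>r\<in>R. \<exists>m\<in>M. covers m r)"

text \<open>MaskPred: the admissible majority labels (any label in {1..c} attaining the maximum
  vote count; ties may be broken arbitrarily) and the resulting disagreer set.\<close>
definition votes :: "(('w,'h,'g) image \<Rightarrow> nat) \<Rightarrow> ('w,'h) mask set \<Rightarrow> ('w,'h,'g) image \<Rightarrow> nat \<Rightarrow> nat" where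
  "votes F M z l = card {m\<in>M. F (z \<circ>\<^sub>m m) = l}"

definition is_majority :: "(('w,'h,'g) image \<Rightarrow> nat) \<Rightarrow> nat \<Rightarrow> ('w,'h) mask set \<Rightarrow> ('w,'h,'g) image \<Rightarrow> nat \<Rightarrow> bool" where
  "is_majority F c M z l \<longleftrightarrow> l \<in> {1..c} \<and> (\<forall>l'\<in>{1..c}. votes F M z l' \<le> votes F M z l)"

definition dis_set :: "(('w,'h,'g) image \<Rightarrow> nat) \<Rightarrow> ('w,'h) mask set \<Rightarrow> ('w,'h,'g) image \<Rightarrow> nat \<Rightarrow> (('w,'h) mask \<times> nat) set" where
  "dis_set F M z l = {(m, F (z \<circ>\<^sub>m m)) | m. m \<in> M \<and> F (z \<circ>\<^sub>m m) \<noteq> l}"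

text \<open>All possible outputs of DoubleMaskingInfer over all tie-breaking choices (in every
  MaskPred call) and all iteration orders over the disagreers.\<close>
definition dm_infer_outputs :: "(('w,'h,'g) image \<Rightarrow> nat) \<Rightarrow> nat \<Rightarrow> ('w,'h) mask set \<Rightarrow> ('w,'h,'g) image \<Rightarrow> nat set" where
  "dm_infer_outputs F c M z = {out. \<exists>ymaj. is_majority F c M z ymaj \<and>
     ((dis_set F M z ymaj = {} \<and> out = ymaj) \<or>
      (dis_set F M z ymaj \<noteq> {} \<and>
       (\<exists>ord k. distinct ord \<and> set ord = dis_set F M z ymaj \<and> k \<le> length ord \<and>
          (\<forall>i<k. \<exists>y'. is_majority F c M (z \<circ>\<^sub>m fst (ord ! i)) y' \<and>
                      dis_set F M (z \<circ>\<^sub>m fst (ord ! i)) y' \<noteq> {}) \<and>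
          ((k < length ord \<and> (\<exists>y'. is_majority F c M (z \<circ>\<^sub>m fst (ord ! k)) y' \<and>
                      dis_set F M (z \<circ>\<^sub>m fst (ord ! k)) y' = {}) \<and> out = snd (ord ! k)) \<or>
           (k = length ord \<and> out = ymaj)))))}"

text \<open>DoubleMaskingCert, returning (certVal, lambda); lambda is 0 outside M.\<close>
definition dm_cert :: "('w,'h,'g) image \<Rightarrow> nat \<Rightarrow> (('w,'h,'g) image \<Rightarrow> nat) \<Rightarrow> ('w,'h) mask set \<Rightarrow> ('w,'h) mask set \<Rightarrow> nat \<times> (('w,'h) mask \<Rightarrow> nat)" where
  "dm_cert x y F R M =
     (if \<not> R_covering R M then (0, \<lambda>_. 0)
      else ((if \<exists>m0\<in>M. \<exists>m1\<in>M. F (x \<circ>\<^sub>m m0 \<circ>\<^sub>m m1) \<noteq> y then 0 else 1),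
            (\<lambda>m. if m \<in> M \<and> \<not> (\<exists>m0\<in>M. \<exists>m1\<in>M. F (x \<circ>\<^sub>m m0 \<circ>\<^sub>m m1) \<noteq> y \<and> (m = m0 \<or> m = m1))
                 then 1 else 0)))"

end

theory Submission
  imports Defs
begin

lemma mm_idem: "binary m \<Longrightarrow> (apply_mask (apply_mask z m) m) = (apply_mask z m)"
  unfolding apply_mask_def binary_def
  by (rule ext)+ (metis mult.assoc mult_1_right mult_zero_right)

lemma mm_comm: "(apply_mask (apply_mask z a) b) = (apply_mask (apply_mask z b) a)"
  unfolding apply_mask_def by (simp add: ac_simps)

lemma patch_mask: "covers ms r \<Longrightarrow> binary ms \<Longrightarrow> binary r \<Longrightarrow> apply_mask (patch r x x2) ms = (apply_mask x ms)"
  unfolding apply_mask_def binary_def covers_def patch_def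
  apply (rule ext)+
  subgoal for i j k
    apply (cases "ms i j = 0")
     apply simp
    apply (subgoal_tac "ms i j = 1 \<and> r i j = 1")
     apply simp
    by (metis linorder_not_le zero_less_one)
  done

lemma maj_exists:
  assumes "(1::nat) \<le> c"
  shows "\<exists>l. is_majority F c M z l"
proof -
  let ?f = "votes F M z"
  let ?S = "?f ` {1..c}"
  have ne: "?S \<noteq> {}" "finite ?S" using assms by auto
  have "Max ?S \<in> ?S" using Max_in[OF ne(2) ne(1)] .
  then obtain l where l: "l \<in> {1..c}" "?f l = Max ?S" by auto
  have "\<forall>l'\<in>{1..c}. ?f l' \<le> ?f l" using l ne by auto
  then show ?thesis using l unfolding is_majority_def by blast
qed

lemma maj_unique:
  assumes "finite M" "m0 \<in> M" "\<forall>m\<in>M. F ((apply_mask w m)) = y" "y \<in> {1..c}"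
    and "is_majority F c M w l"
  shows "l = y"
proof (rule ccontr)
  assume ne: "l \<noteq> y"
  have "{m\<in>M. F (apply_mask w m) = y} = M" using assms(3) by blast
  then have "votes F M w y = card M" unfolding votes_def by simp
  moreover have "{m\<in>M. F (apply_mask w m) = l} = {}" using assms(3) ne by auto
  then have "votes F M w l = 0" unfolding votes_def by (simp only: card.empty)
  moreover have "votes F M w y \<le> votes F M w l" using assms(4,5) unfolding is_majority_def by blast
  moreover have "card M > 0" using assms(1,2) card_gt_0_iff by blast
  ultimately show False by simp
qed

lemma dis_empty_label:
  assumes "m \<in> M" "dis_set F M w l = {}"
  shows "F ((apply_mask w m)) = l"
  using assms unfolding dis_set_def by blast

lemma dis_finite: "finite M \<Longrightarrow> finite (dis_set F M w l)"
proof -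
  assume "finite M"
  moreover have "dis_set F M w l \<subseteq> (\<lambda>m. (m, F ((apply_mask w m)))) ` M" unfolding dis_set_def by blast
  ultimately show ?thesis using finite_surj by blast
qed

lemma out_intro1: "is_majority F c M z l \<Longrightarrow> dis_set F M z l = {} \<Longrightarrow> l \<in> dm_infer_outputs F c M z"
  unfolding dm_infer_outputs_def mem_Collect_eq
  apply (rule exI[of _ l])
  apply (rule conjI, assumption)
  apply (rule disjI1)
  apply (rule conjI, assumption)
  by (rule refl)

lemma out_intro2: "is_majority F c M z l \<Longrightarrow> dis_set F M z l \<noteq> {} \<Longrightarrow>
   (\<exists>ord k. distinct ord \<and> set ord = dis_set F M z l \<and> k \<le> length ord \<and>
          (\<forall>i<k. \<exists>y'. is_majority F c M ((apply_mask z (fst (ord ! i)))) y' \<and>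
                      dis_set F M ((apply_mask z (fst (ord ! i)))) y' \<noteq> {}) \<and>
          ((k < length ord \<and> (\<exists>y'. is_majority F c M ((apply_mask z (fst (ord ! k)))) y' \<and>
                      dis_set F M ((apply_mask z (fst (ord ! k)))) y' = {}) \<and> out = snd (ord ! k)) \<or>
           (k = length ord \<and> out = l))) \<Longrightarrow> out \<in> dm_infer_outputs F c M z"
  unfolding dm_infer_outputs_def mem_Collect_eq
  apply (rule exI[of _ l])
  apply (rule conjI, assumption)
  apply (rule disjI2)
  apply (rule conjI, assumption)
  by assumption

lemma out_intro3:
  assumes "is_majority F c M z l" "distinct ((m,out)#ord0)" "set ((m,out)#ord0) = dis_set F M z l"
    "is_majority F c M (apply_mask z m) y'" "dis_set F M (apply_mask z m) y' = {}"
  shows "out \<in> dm_infer_outputs F c M z"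
proof -
  have ne: "dis_set F M z l \<noteq> {}" using assms(3) by auto
  show ?thesis
    unfolding dm_infer_outputs_def mem_Collect_eq
    apply (rule exI[of _ l])
    apply (rule conjI[OF assms(1)])
    apply (rule disjI2)
    apply (rule conjI[OF ne])
    apply (rule exI[of _ "(m,out)#ord0"], rule exI[of _ 0])
    using assms by auto
qed
theorem mainTheorem3:
  fixes x :: "('w::finite,'h::finite,'g::finite) image"
    and y c :: nat
    and F :: "('w,'h,'g) image \<Rightarrow> nat"
    and R M :: "('w,'h) mask set"
    and m_star :: "('w,'h) mask"
  assumes "y \<in> {1..c}"
    and "\<forall>z. F z \<in> {1..c}"
    and "\<forall>r\<in>R. binary r"
    and "finite M" and "\<forall>m\<in>M. binary m"
    and "R_covering R M"
    and "m_star \<in> M"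
    and "snd (dm_cert x y F R M) m_star = 1"
  shows "\<forall>r\<in>R. covers m_star r \<longrightarrow>
           (\<forall>x2 :: ('w,'h,'g) image. dm_infer_outputs F c M (patch r x x2) = {y})"
proof (intro ballI impI allI)
  fix r x2 assume rR: "r \<in> R" and cov: "covers m_star r"
  define z where "z = patch r x x2"
  have lam: "\<forall>m0\<in>M. \<forall>m1\<in>M. F ((apply_mask (apply_mask x m0) m1)) = y \<or> (m_star \<noteq> m0 \<and> m_star \<noteq> m1)"
    using assms(6,8) unfolding dm_cert_def by (auto split: if_splits)
  have bs: "binary m_star" using assms(5,7) by blast
  have zs: "(apply_mask z m_star) = (apply_mask x m_star)"
    unfolding z_def using patch_mask[OF cov bs] assms(3) rR by blast
  have K1': "\<forall>m\<in>M. F ((apply_mask (apply_mask z m_star) m)) = y"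
  proof
    fix m assume m: "m \<in> M"
    have "F (apply_mask (apply_mask x m_star) m) = y \<or> (m_star \<noteq> m_star \<and> m_star \<noteq> m)"
      using lam assms(7) m by blast
    then have "F (apply_mask (apply_mask x m_star) m) = y" by simp
    then show "F ((apply_mask (apply_mask z m_star) m)) = y" by (simp only: zs)
  qed
  have K1: "\<forall>m\<in>M. F ((apply_mask (apply_mask z m) m_star)) = y"
  proof
    fix m assume m: "m \<in> M"
    have "apply_mask (apply_mask z m) m_star = apply_mask (apply_mask z m_star) m" by (rule mm_comm)
    then show "F ((apply_mask (apply_mask z m) m_star)) = y" using K1' m by simp
  qed
  have K2: "F ((apply_mask z m_star)) = y"
  proof -
    have "F (apply_mask (apply_mask z m_star) m_star) = y" using K1' assms(7) by blast
    then show ?thesis by (simp only: mm_idem[OF bs])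
  qed
  have c1: "1 \<le> c" using assms(1) by auto
  have ms_maj: "is_majority F c M ((apply_mask z m_star)) l \<Longrightarrow> l = y" for l
    using maj_unique[OF assms(4) assms(7) K1' assms(1)] by blast
  have ms_dis: "dis_set F M ((apply_mask z m_star)) y = {}"
    using K1' unfolding dis_set_def by auto
  have ms_majy: "is_majority F c M ((apply_mask z m_star)) y"
    using maj_exists[OF c1] ms_maj by blast
  have dis_lab: "md \<in> M \<Longrightarrow> dis_set F M ((apply_mask z md)) l = {} \<Longrightarrow> F ((apply_mask z md)) = y" for md l
  proof -
    assume md: "md \<in> M" and e: "dis_set F M ((apply_mask z md)) l = {}"
    have "F ((apply_mask (apply_mask z md) m_star)) = l" by (rule dis_empty_label[OF assms(7) e])
    moreover have "F ((apply_mask (apply_mask z md) md)) = l" by (rule dis_empty_label[OF md e])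
    moreover have "F ((apply_mask (apply_mask z md) m_star)) = y" using K1 md by blast
    moreover have "apply_mask (apply_mask z md) md = apply_mask z md" using mm_idem assms(5) md by blast
    ultimately show ?thesis by simp
  qed
  show "dm_infer_outputs F c M z = {y}"
  proof
    show "dm_infer_outputs F c M z \<subseteq> {y}"
    proof
      fix out assume "out \<in> dm_infer_outputs F c M z"
      then have "\<exists>ymaj. is_majority F c M z ymaj \<and> ((dis_set F M z ymaj = {} \<and> out = ymaj) \<or>
      (dis_set F M z ymaj \<noteq> {} \<and>
       (\<exists>ord k. distinct ord \<and> set ord = dis_set F M z ymaj \<and> k \<le> length ord \<and>
          (\<forall>i<k. \<exists>y'. is_majority F c M ((apply_mask z (fst (ord ! i)))) y' \<and>
                      dis_set F M ((apply_mask z (fst (ord ! i)))) y' \<noteq> {}) \<and>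
          ((k < length ord \<and> (\<exists>y'. is_majority F c M ((apply_mask z (fst (ord ! k)))) y' \<and>
                      dis_set F M ((apply_mask z (fst (ord ! k)))) y' = {}) \<and> out = snd (ord ! k)) \<or>
           (k = length ord \<and> out = ymaj)))))"
        by (simp only: dm_infer_outputs_def mem_Collect_eq)
      then obtain ymaj where MH: "is_majority F c M z ymaj \<and> ((dis_set F M z ymaj = {} \<and> out = ymaj) \<or>
      (dis_set F M z ymaj \<noteq> {} \<and>
       (\<exists>ord k. distinct ord \<and> set ord = dis_set F M z ymaj \<and> k \<le> length ord \<and>
          (\<forall>i<k. \<exists>y'. is_majority F c M ((apply_mask z (fst (ord ! i)))) y' \<and>
                      dis_set F M ((apply_mask z (fst (ord ! i)))) y' \<noteq> {}) \<and>
          ((k < length ord \<and> (\<exists>y'. is_majority F c M ((apply_mask z (fst (ord ! k)))) y' \<and>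
                      dis_set F M ((apply_mask z (fst (ord ! k)))) y' = {}) \<and> out = snd (ord ! k)) \<or>
           (k = length ord \<and> out = ymaj)))))" ..
      from MH have maj: "is_majority F c M z ymaj" by (rule conjunct1)
      from MH have H: "(dis_set F M z ymaj = {} \<and> out = ymaj) \<or>
      (dis_set F M z ymaj \<noteq> {} \<and>
       (\<exists>ord k. distinct ord \<and> set ord = dis_set F M z ymaj \<and> k \<le> length ord \<and>
          (\<forall>i<k. \<exists>y'. is_majority F c M ((apply_mask z (fst (ord ! i)))) y' \<and>
                      dis_set F M ((apply_mask z (fst (ord ! i)))) y' \<noteq> {}) \<and>
          ((k < length ord \<and> (\<exists>y'. is_majority F c M ((apply_mask z (fst (ord ! k)))) y' \<and>
                      dis_set F M ((apply_mask z (fst (ord ! k)))) y' = {}) \<and> out = snd (ord ! k)) \<or>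
           (k = length ord \<and> out = ymaj))))" by (rule conjunct2)
      show "out \<in> {y}"
      proof (cases "dis_set F M z ymaj = {}")
        case True
        have yy: "ymaj = y" using dis_empty_label[OF assms(7) True] K2 by simp
        show ?thesis
        proof (rule disjE[OF H])
          assume "dis_set F M z ymaj = {} \<and> out = ymaj"
          then have "out = ymaj" by (rule conjunct2)
          then show ?thesis using yy by simp
        next
          assume "dis_set F M z ymaj \<noteq> {} \<and> (\<exists>ord k. distinct ord \<and> set ord = dis_set F M z ymaj \<and> k \<le> length ord \<and>
          (\<forall>i<k. \<exists>y'. is_majority F c M ((apply_mask z (fst (ord ! i)))) y' \<and>
                      dis_set F M ((apply_mask z (fst (ord ! i)))) y' \<noteq> {}) \<and>
          ((k < length ord \<and> (\<exists>y'. is_majority F c M ((apply_mask z (fst (ord ! k)))) y' \<and>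
                      dis_set F M ((apply_mask z (fst (ord ! k)))) y' = {}) \<and> out = snd (ord ! k)) \<or>
           (k = length ord \<and> out = ymaj)))"
          then have "dis_set F M z ymaj \<noteq> {}" by (rule conjunct1)
          then show ?thesis using True by (rule notE)
        qed
      next
        case False
        have E: "\<exists>ord k. distinct ord \<and> set ord = dis_set F M z ymaj \<and> k \<le> length ord \<and>
          (\<forall>i<k. \<exists>y'. is_majority F c M ((apply_mask z (fst (ord ! i)))) y' \<and>
                      dis_set F M ((apply_mask z (fst (ord ! i)))) y' \<noteq> {}) \<and>
          ((k < length ord \<and> (\<exists>y'. is_majority F c M ((apply_mask z (fst (ord ! k)))) y' \<and>
                      dis_set F M ((apply_mask z (fst (ord ! k)))) y' = {}) \<and> out = snd (ord ! k)) \<or>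
           (k = length ord \<and> out = ymaj))"
        proof (rule disjE[OF H])
          assume "dis_set F M z ymaj = {} \<and> out = ymaj"
          then have "dis_set F M z ymaj = {}" by (rule conjunct1)
          with False show ?thesis by (rule notE)
        next
          assume "dis_set F M z ymaj \<noteq> {} \<and> (\<exists>ord k. distinct ord \<and> set ord = dis_set F M z ymaj \<and> k \<le> length ord \<and>
          (\<forall>i<k. \<exists>y'. is_majority F c M ((apply_mask z (fst (ord ! i)))) y' \<and>
                      dis_set F M ((apply_mask z (fst (ord ! i)))) y' \<noteq> {}) \<and>
          ((k < length ord \<and> (\<exists>y'. is_majority F c M ((apply_mask z (fst (ord ! k)))) y' \<and>
                      dis_set F M ((apply_mask z (fst (ord ! k)))) y' = {}) \<and> out = snd (ord ! k)) \<or>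
           (k = length ord \<and> out = ymaj)))"
          then show ?thesis by (rule conjunct2)
        qed
        then obtain ord where "\<exists>k. distinct ord \<and> set ord = dis_set F M z ymaj \<and> k \<le> length ord \<and>
          (\<forall>i<k. \<exists>y'. is_majority F c M ((apply_mask z (fst (ord ! i)))) y' \<and>
                      dis_set F M ((apply_mask z (fst (ord ! i)))) y' \<noteq> {}) \<and>
          ((k < length ord \<and> (\<exists>y'. is_majority F c M ((apply_mask z (fst (ord ! k)))) y' \<and>
                      dis_set F M ((apply_mask z (fst (ord ! k)))) y' = {}) \<and> out = snd (ord ! k)) \<or>
           (k = length ord \<and> out = ymaj))" ..
        then obtain k where OK: "distinct ord \<and> set ord = dis_set F M z ymaj \<and> k \<le> length ord \<and>
          (\<forall>i<k. \<exists>y'. is_majority F c M ((apply_mask z (fst (ord ! i)))) y' \<and>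
                      dis_set F M ((apply_mask z (fst (ord ! i)))) y' \<noteq> {}) \<and>
          ((k < length ord \<and> (\<exists>y'. is_majority F c M ((apply_mask z (fst (ord ! k)))) y' \<and>
                      dis_set F M ((apply_mask z (fst (ord ! k)))) y' = {}) \<and> out = snd (ord ! k)) \<or>
           (k = length ord \<and> out = ymaj))" ..
        have o: "distinct ord" "set ord = dis_set F M z ymaj" "k \<le> length ord"
          using OK[THEN conjunct1] OK[THEN conjunct2, THEN conjunct1]
            OK[THEN conjunct2, THEN conjunct2, THEN conjunct1] by this+
        have pre: "\<forall>i<k. \<exists>y'. is_majority F c M ((apply_mask z (fst (ord ! i)))) y' \<and>
                      dis_set F M ((apply_mask z (fst (ord ! i)))) y' \<noteq> {}"
          by (rule OK[THEN conjunct2, THEN conjunct2, THEN conjunct2, THEN conjunct1])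
        have fin: "(k < length ord \<and> (\<exists>y'. is_majority F c M ((apply_mask z (fst (ord ! k)))) y' \<and>
                      dis_set F M ((apply_mask z (fst (ord ! k)))) y' = {}) \<and> out = snd (ord ! k)) \<or>
           (k = length ord \<and> out = ymaj)"
          by (rule OK[THEN conjunct2, THEN conjunct2, THEN conjunct2, THEN conjunct2])
        show ?thesis
        proof (cases "k < length ord")
          case True
          then obtain y' where e: "dis_set F M ((apply_mask z (fst (ord ! k)))) y' = {}" and
            oo: "out = snd (ord ! k)" using fin by auto
          have "ord ! k \<in> dis_set F M z ymaj" using True o(2) nth_mem by blast
          then obtain md where md: "md \<in> M" "ord ! k = (md, F ((apply_mask z md)))"
            unfolding dis_set_def by blast
          then show ?thesis using dis_lab[OF md(1)] e oo by simp
        next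
          case False
          then have kl: "k = length ord" "out = ymaj" using fin o(3) by auto
          show ?thesis
          proof (rule ccontr)
            assume "out \<notin> {y}"
            then have "(m_star, y) \<in> dis_set F M z ymaj"
              using kl K2 assms(7) unfolding dis_set_def by auto
            then obtain i where i: "i < length ord" "ord ! i = (m_star, y)"
              using o(2) by (metis in_set_conv_nth)
            then obtain y' where "is_majority F c M ((apply_mask z m_star)) y'"
              "dis_set F M ((apply_mask z m_star)) y' \<noteq> {}" using pre kl by (metis fst_conv)
            then show False using ms_maj ms_dis by blast
          qed
        qed
      qed
    qed
  next
    obtain ymaj where maj: "is_majority F c M z ymaj" using maj_exists[OF c1] by blast
    have fd: "finite (dis_set F M z ymaj)" using dis_finite[OF assms(4)] .
    show "{y} \<subseteq> dm_infer_outputs F c M z"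
    proof (cases "dis_set F M z ymaj = {}")
      case True
      then have yy: "ymaj = y" using dis_empty_label[OF assms(7) True] K2 by auto
      have "ymaj \<in> dm_infer_outputs F c M z" by (rule out_intro1[OF maj True])
      then show ?thesis using yy by simp
    next
      case False
      show ?thesis
      proof (cases "ymaj = y")
        case True
        obtain ord where o: "distinct ord" "set ord = dis_set F M z ymaj"
          using finite_distinct_list[OF fd] by blast
        have ALL: "\<forall>i<length ord. \<exists>y'. is_majority F c M ((apply_mask z (fst (ord ! i)))) y' \<and>
                      dis_set F M ((apply_mask z (fst (ord ! i)))) y' \<noteq> {}"
        proof (intro allI impI)
          fix i assume "i < length ord"
          then have "ord ! i \<in> dis_set F M z ymaj" using o(2) nth_mem by blast
          then obtain md where md: "md \<in> M" "ord ! i = (md, F ((apply_mask z md)))" "F ((apply_mask z md)) \<noteq> ymaj"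
            unfolding dis_set_def mem_Collect_eq by blast
          obtain y' where y': "is_majority F c M ((apply_mask z md)) y'" using maj_exists[OF c1] by blast
          have nd: "dis_set F M ((apply_mask z md)) y' \<noteq> {}" using dis_lab[OF md(1)] md(3) True by blast
          show "\<exists>y'. is_majority F c M ((apply_mask z (fst (ord ! i)))) y' \<and>
                      dis_set F M ((apply_mask z (fst (ord ! i)))) y' \<noteq> {}"
            unfolding md(2) fst_conv using y' nd by blast
        qed
        have "\<exists>ord k. distinct ord \<and> set ord = dis_set F M z ymaj \<and> k \<le> length ord \<and>
          (\<forall>i<k. \<exists>y'. is_majority F c M ((apply_mask z (fst (ord ! i)))) y' \<and>
                      dis_set F M ((apply_mask z (fst (ord ! i)))) y' \<noteq> {}) \<and>
          ((k < length ord \<and> (\<exists>y'. is_majority F c M ((apply_mask z (fst (ord ! k)))) y' \<and>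
                      dis_set F M ((apply_mask z (fst (ord ! k)))) y' = {}) \<and> y = snd (ord ! k)) \<or>
           (k = length ord \<and> y = ymaj))"
          apply (rule exI[of _ ord], rule exI[of _ "length ord"])
          apply (rule conjI, rule o(1))
          apply (rule conjI, rule o(2))
          apply (rule conjI, rule order_refl)
          apply (rule conjI, rule ALL)
          apply (rule disjI2)
          apply (rule conjI, rule refl)
          by (rule True[symmetric])
        then have "y \<in> dm_infer_outputs F c M z" by (rule out_intro2[OF maj False])
        then show ?thesis by simp
      next
        case False2: False
        have mem: "(m_star, y) \<in> dis_set F M z ymaj"
          using K2 assms(7) False2 unfolding dis_set_def by auto
        obtain ord0 where o0: "distinct ord0" "set ord0 = dis_set F M z ymaj - {(m_star, y)}"
          using finite_distinct_list[of "dis_set F M z ymaj - {(m_star, y)}"] fd by blast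
        have d: "distinct ((m_star, y) # ord0)" using o0 by simp
        have st: "set ((m_star, y) # ord0) = dis_set F M z ymaj" using o0 mem by (simp add: insert_absorb)
        have "y \<in> dm_infer_outputs F c M z" by (rule out_intro3[OF maj d st ms_majy ms_dis])
        then show ?thesis by simp
      qed
    qed
  qed
qed

end
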